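(* Let $G=(V,E)$ be a connected graph with $n$ vertices and maximum degree $\Delta$, let $k\in\{2,\dots,n-1\}$, and let $\mathscr{S}$ be any $k$-block system for $G$. Then $\mu^+(\mathscr{S})\le\Delta-1+\frac1k$.
   Context: Potts configurations on $G$: $\sigma\in\Omega=[q]^V$, $q$ a positive integer. A $k$-block system for $G$ is a family $\mathscr{S}=\{S_v:v\in V\}$ of subsets of $V$ with $v\in S_v$, $|S_v|=k$ and $G[S_v]$ connected for all $v$. For $S\subseteq V$, $\partial S$ is the set of vertices of $V\setminus S$ with a neighbour in $S$. For $X\in\Omega$ and $c\in[q]^S$, $X^{(S,c)}$ equals $c$ on $S$ and $X$ off $S$; $\mu_{X,S}(c)$ is the number of monochromatic edges of $X^{(S,c)}$ incident with at least one vertex of $S$. A colour used by $c$ is free with respect to $X,S$ if it does not occur among $\{X(u):u\in\partial S\}$; $f(X,S,c)$ is the number of free colours used by $c$. $\mu^+_{X,S,f}=\max\{\mu_{X,S}(c)/(|S|-f): c\in[q]^S,\ f(X,S,c)=f\}$ (empty maximum $=0$), and $\mu^+(\mathscr{S})=\max_{S\in\mathscr{S}}\max_{X\in\Omega}\max_{f\in\{0,\dots,|S|-1\}}\mu^+_{X,S,f}$. *)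

theory Defs
  imports "HOL-Analysis.Analysis"
begin

definition simple_graph :: "'a set \<Rightarrow> ('a \<Rightarrow> 'a \<Rightarrow> bool) \<Rightarrow> bool" where
  "simple_graph V E \<longleftrightarrow> finite V \<and> (\<forall>u w. E u w \<longrightarrow> u \<in> V \<and> w \<in> V \<and> u \<noteq> w \<and> E w u)"

definition induced_connected :: "('a \<Rightarrow> 'a \<Rightarrow> bool) \<Rightarrow> 'a set \<Rightarrow> bool" where
  "induced_connected E S \<longleftrightarrow>
     (\<forall>u\<in>S. \<forall>w\<in>S. (\<lambda>x y. E x y \<and> x \<in> S \<and> y \<in> S)\<^sup>*\<^sup>* u w)"

definition graph_connected :: "'a set \<Rightarrow> ('a \<Rightarrow> 'a \<Rightarrow> bool) \<Rightarrow> bool" where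
  "graph_connected V E \<longleftrightarrow> induced_connected E V"

definition degree :: "'a set \<Rightarrow> ('a \<Rightarrow> 'a \<Rightarrow> bool) \<Rightarrow> 'a \<Rightarrow> nat" where
  "degree V E v = card {u \<in> V. E v u}"

definition max_degree :: "'a set \<Rightarrow> ('a \<Rightarrow> 'a \<Rightarrow> bool) \<Rightarrow> nat" where
  "max_degree V E = Max (degree V E ` V)"

definition block_system :: "'a set \<Rightarrow> ('a \<Rightarrow> 'a \<Rightarrow> bool) \<Rightarrow> nat \<Rightarrow> ('a \<Rightarrow> 'a set) \<Rightarrow> bool" where
  "block_system V E k Sys \<longleftrightarrow>
     (\<forall>v\<in>V. Sys v \<subseteq> V \<and> v \<in> Sys v \<and> card (Sys v) = k \<and> induced_connected E (Sys v))"

definition bdry :: "'a set \<Rightarrow> ('a \<Rightarrow> 'a \<Rightarrow> bool) \<Rightarrow> 'a set \<Rightarrow> 'a set" where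
  "bdry V E S = {u \<in> V - S. \<exists>w\<in>S. E u w}"

definition configs :: "nat \<Rightarrow> 'a set \<Rightarrow> ('a \<Rightarrow> nat) set" where
  "configs q A = A \<rightarrow>\<^sub>E {1..q}"

definition upd_conf :: "('a \<Rightarrow> nat) \<Rightarrow> 'a set \<Rightarrow> ('a \<Rightarrow> nat) \<Rightarrow> 'a \<Rightarrow> nat" where
  "upd_conf X S c = (\<lambda>u. if u \<in> S then c u else X u)"

definition mu :: "'a set \<Rightarrow> ('a \<Rightarrow> 'a \<Rightarrow> bool) \<Rightarrow> ('a \<Rightarrow> nat) \<Rightarrow> 'a set \<Rightarrow> ('a \<Rightarrow> nat) \<Rightarrow> nat" where
  "mu V E X S c = card {{u, w} | u w. E u w \<and> (u \<in> S \<or> w \<in> S)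
                         \<and> upd_conf X S c u = upd_conf X S c w}"

definition free_count :: "'a set \<Rightarrow> ('a \<Rightarrow> 'a \<Rightarrow> bool) \<Rightarrow> ('a \<Rightarrow> nat) \<Rightarrow> 'a set \<Rightarrow> ('a \<Rightarrow> nat) \<Rightarrow> nat" where
  "free_count V E X S c = card (c ` S - X ` bdry V E S)"

definition mu_plus_f :: "nat \<Rightarrow> 'a set \<Rightarrow> ('a \<Rightarrow> 'a \<Rightarrow> bool) \<Rightarrow> ('a \<Rightarrow> nat) \<Rightarrow> 'a set \<Rightarrow> nat \<Rightarrow> real" where
  "mu_plus_f q V E X S f =
     (let R = {real (mu V E X S c) / (real (card S) - real f) | c.
                 c \<in> configs q S \<and> free_count V E X S c = f}
      in if R = {} then 0 else Max R)"

definition mu_plus_sys :: "nat \<Rightarrow> 'a set \<Rightarrow> ('a \<Rightarrow> 'a \<Rightarrow> bool) \<Rightarrow> ('a \<Rightarrow> 'a set) \<Rightarrow> real" where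
  "mu_plus_sys q V E Sys =
     Max {mu_plus_f q V E X S f | S X f. S \<in> Sys ` V \<and> X \<in> configs q V \<and> f < card S}"

end

theory Submission
  imports Defs
begin

lemma rtranclp_closed:
  assumes "R\<^sup>*\<^sup>* a b" "a \<in> C" "\<And>p q. R p q \<Longrightarrow> p \<in> C \<Longrightarrow> q \<in> C"
  shows "b \<in> C"
  using assms by (induction rule: rtranclp_induct) auto

locale blk =
  fixes V :: "'a set" and E :: "'a \<Rightarrow> 'a \<Rightarrow> bool" and S :: "'a set" and X c :: "'a \<Rightarrow> nat"
  assumes sg: "simple_graph V E" and gc: "graph_connected V E"
    and SV: "S \<subseteq> V" and Sc: "induced_connected E S" and S2: "2 \<le> card S"
    and SVc: "card S < card V"
begin

abbreviation "Y \<equiv> upd_conf X S c"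
definition "Fc = c ` S - X ` bdry V E S"
definition "M T = {{u, w} | u w. E u w \<and> (u \<in> T \<or> w \<in> T) \<and> Y u = Y w}"
definition "g T = card (Y ` (S - T) \<inter> Fc)"
definition "u T = card (S - T) - g T"
definition "D = max_degree V E"
definition "N x T = {w. E x w \<and> Y w = Y x \<and> w \<notin> T}"
definition "B = (D - 1) * (card S - card Fc) + (if card Fc = 0 then 1 else 0)"

lemma finV: "finite V" using sg unfolding simple_graph_def by blast
lemma Eprops: "E a b \<Longrightarrow> a \<in> V \<and> b \<in> V \<and> a \<noteq> b \<and> E b a" using sg unfolding simple_graph_def by blast
lemma finS: "finite S" using finV SV finite_subset by auto
lemma Yin: "v \<in> S \<Longrightarrow> Y v = c v" by (simp add: upd_conf_def)
lemma Yout: "v \<notin> S \<Longrightarrow> Y v = X v" by (simp add: upd_conf_def)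

lemma Fc_img: "Fc \<subseteq> Y ` S" unfolding Fc_def using Yin by force

lemma finFc: "finite Fc" using Fc_img finS finite_subset by blast

lemma free_out:
  assumes a: "x \<in> S" "Y x \<in> Fc" "E x w" "w \<notin> S"
  shows "Y w \<noteq> Y x"
proof
  assume e: "Y w = Y x"
  have "w \<in> bdry V E S" using a Eprops[OF a(3)] unfolding bdry_def by auto
  then have "Y x \<in> X ` bdry V E S" using a e Yout by (metis image_eqI)
  then show False using a(2) unfolding Fc_def by auto
qed

lemma deg_le: "x \<in> V \<Longrightarrow> card {u\<in>V. E x u} \<le> D"
proof -
  assume x: "x \<in> V"
  have "degree V E x \<le> Max (degree V E ` V)"
    using finV x by (intro Max_ge) auto
  then show ?thesis unfolding D_def max_degree_def degree_def .
qed

lemma finA: "finite {u\<in>V. E x u}" using finV by auto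

lemma N_sub: "N x T \<subseteq> {u\<in>V. E x u} - T" unfolding N_def using Eprops by auto

lemma finN: "finite (N x T)" using N_sub finA by (meson finite_Diff finite_subset)

lemma N_bound1: "x \<in> V \<Longrightarrow> card (N x T) \<le> D"
proof -
  assume x: "x \<in> V"
  have "card (N x T) \<le> card {u\<in>V. E x u}"
    using N_sub finA by (meson Diff_subset card_mono subset_trans)
  then show ?thesis using deg_le[OF x] by linarith
qed

lemma N_bound2:
  assumes x: "x \<in> V" and y: "y \<in> {u\<in>V. E x u}" "y \<notin> N x T"
  shows "card (N x T) \<le> D - 1"
proof -
  have "N x T \<subseteq> {u\<in>V. E x u} - {y}" using N_sub y by auto
  then have "card (N x T) \<le> card ({u\<in>V. E x u} - {y})"
    using finA by (meson card_mono finite_Diff)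
  also have "\<dots> = card {u\<in>V. E x u} - 1" using y finA by simp
  finally show ?thesis using deg_le[OF x] by linarith
qed

lemma N_bound0:
  assumes "x \<in> S" "Y x \<in> Fc" "Y x \<notin> Y ` (S - insert x T)"
  shows "N x T = {}"
proof (rule ccontr)
  assume "N x T \<noteq> {}"
  then obtain w where w: "E x w" "Y w = Y x" "w \<notin> T" unfolding N_def by auto
  show False
  proof (cases "w \<in> S")
    case True
    then have "w \<in> S - insert x T" using w Eprops[OF w(1)] by auto
    then show False using assms(3) w(2) by (metis image_eqI)
  next
    case False
    then show False using free_out[OF assms(1,2) w(1)] w(2) by auto
  qed
qed

lemma g_le: "g T \<le> card (S - T)"
proof -
  have "g T \<le> card (Y ` (S - T))" unfolding g_def
    using finS by (meson card_mono finite_Diff finite_imageI inf_le1)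
  also have "\<dots> \<le> card (S - T)" using card_image_le finS by blast
  finally show ?thesis .
qed

lemma u_step:
  assumes "x \<in> S" "x \<notin> T"
  shows "u T = u (insert x T) + (if Y x \<in> Fc \<and> Y x \<notin> Y ` (S - insert x T) then 0 else 1)"
proof -
  define A where "A = S - insert x T"
  have ST: "S - T = insert x A" "x \<notin> A" using assms unfolding A_def by auto
  have fA: "finite A" using finS unfolding A_def by auto
  have c1: "card (S - T) = card A + 1" using ST fA by simp
  have gi: "g (insert x T) = card (Y ` A \<inter> Fc)" unfolding g_def A_def by simp
  have gle: "g (insert x T) \<le> card A" using g_le[of "insert x T"] unfolding A_def by simp
  have im: "Y ` (S - T) = insert (Y x) (Y ` A)" using ST by simp
  show ?thesis
  proof (cases "Y x \<in> Fc \<and> Y x \<notin> Y ` A")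
    case True
    then have "Y ` (S - T) \<inter> Fc = insert (Y x) (Y ` A \<inter> Fc)" using im by auto
    then have "g T = card (insert (Y x) (Y ` A \<inter> Fc))" unfolding g_def by simp
    also have "\<dots> = card (Y ` A \<inter> Fc) + 1" using True finFc by simp
    finally have "g T = g (insert x T) + 1" using gi by simp
    then show ?thesis unfolding u_def using True c1 gle A_def by simp
  next
    case False
    then have "Y ` (S - T) \<inter> Fc = Y ` A \<inter> Fc" using im by auto
    then have "g T = card (Y ` A \<inter> Fc)" unfolding g_def by simp
    then have "g T = g (insert x T)" using gi by simp
    then show ?thesis unfolding u_def using False c1 gle A_def by (auto simp: Suc_diff_le)
  qed
qed

lemma finM: "finite (M T)"
proof -
  have "M T \<subseteq> (\<lambda>(a, b). {a, b}) ` (V \<times> V)" unfolding M_def using Eprops by fastforce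
  then show ?thesis using finV by (meson finite_SigmaI finite_imageI finite_subset)
qed

lemma M_insert: "M (insert x T) \<subseteq> M T \<union> (\<lambda>w. {x, w}) ` N x T"
proof
  fix e assume "e \<in> M (insert x T)"
  then obtain a b where e: "e = {a, b}" "E a b" "a \<in> insert x T \<or> b \<in> insert x T" "Y a = Y b"
    unfolding M_def by auto
  show "e \<in> M T \<union> (\<lambda>w. {x, w}) ` N x T"
  proof (cases "a \<in> T \<or> b \<in> T")
    case True
    then have "e \<in> M T" unfolding M_def using e by auto
    then show ?thesis by simp
  next
    case False
    then have "a = x \<or> b = x" using e by auto
    then show ?thesis
    proof
      assume "a = x"
      then have "b \<in> N x T" unfolding N_def using e False by auto
      then show ?thesis using e \<open>a = x\<close> by auto
    next
      assume "b = x"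
      then have "a \<in> N x T" unfolding N_def using e False Eprops[OF e(2)] by auto
      then show ?thesis using e \<open>b = x\<close> by auto
    qed
  qed
qed

lemma card_M_insert: "card (M (insert x T)) \<le> card (M T) + card (N x T)"
proof -
  have "card (M (insert x T)) \<le> card (M T \<union> (\<lambda>w. {x, w}) ` N x T)"
    using M_insert finM finN by (meson card_mono finite_UnI finite_imageI)
  also have "\<dots> \<le> card (M T) + card ((\<lambda>w. {x, w}) ` N x T)" by (rule card_Un_le)
  also have "\<dots> \<le> card (M T) + card (N x T)" using card_image_le[OF finN[of x T], of "\<lambda>w. {x, w}"] by simp
  finally show ?thesis .
qed

lemma step:
  assumes T: "T \<subseteq> S" and x: "x \<in> S" "x \<notin> T"
  shows "card (M (insert x T)) + (D - 1) * u (insert x T)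
     \<le> card (M T) + (D - 1) * u T
        + (if (\<exists>t\<in>T. E x t) \<or> (Y x \<in> Fc \<and> (\<exists>w. E x w \<and> Y w \<noteq> Y x)) then 0 else 1)"
proof -
  have xV: "x \<in> V" using x SV by auto
  note us = u_step[OF x]
  note cm = card_M_insert[of x T]
  show ?thesis
  proof (cases "Y x \<in> Fc \<and> Y x \<notin> Y ` (S - insert x T)")
    case True
    then have "N x T = {}" using N_bound0 x by auto
    then show ?thesis using us cm True by simp
  next
    case False
    then have ueq: "u T = u (insert x T) + 1" using us by simp
    have nb: "card (N x T) \<le> D - 1 + (if (\<exists>t\<in>T. E x t) \<or> (Y x \<in> Fc \<and> (\<exists>w. E x w \<and> Y w \<noteq> Y x)) then 0 else 1)"
    proof (cases "(\<exists>t\<in>T. E x t) \<or> (Y x \<in> Fc \<and> (\<exists>w. E x w \<and> Y w \<noteq> Y x))")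
      case True
      then have "card (N x T) \<le> D - 1"
      proof
        assume "\<exists>t\<in>T. E x t"
        then obtain t where "t \<in> T" "E x t" by auto
        then show ?thesis using N_bound2[OF xV, of t T] Eprops unfolding N_def by auto
      next
        assume "Y x \<in> Fc \<and> (\<exists>w. E x w \<and> Y w \<noteq> Y x)"
        then obtain w where "E x w" "Y w \<noteq> Y x" by auto
        then show ?thesis using N_bound2[OF xV, of w T] Eprops unfolding N_def by auto
      qed
      then show ?thesis using True by simp
    next
      case False
      then show ?thesis using N_bound1[OF xV, of T] by (cases D) auto
    qed
    show ?thesis using cm nb ueq by (simp add: algebra_simps)
  qed
qed

lemma adj:
  assumes "T \<subseteq> S" "T \<noteq> {}" "T \<noteq> S"
  shows "\<exists>x\<in>S - T. \<exists>t\<in>T. E x t"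
proof (rule ccontr)
  assume na: "\<not> ?thesis"
  obtain t where t: "t \<in> T" using assms by auto
  obtain s where s: "s \<in> S" "s \<notin> T" using assms by auto
  have "(\<lambda>x y. E x y \<and> x \<in> S \<and> y \<in> S)\<^sup>*\<^sup>* t s"
    using Sc t s assms(1) unfolding induced_connected_def by auto
  moreover have "\<And>p q. E p q \<and> p \<in> S \<and> q \<in> S \<Longrightarrow> p \<in> T \<Longrightarrow> q \<in> T"
    using na Eprops by blast
  ultimately have "s \<in> T" using rtranclp_closed[of _ t s T] t by blast
  then show False using s by simp
qed

lemma root:
  assumes "Fc \<noteq> {}"
  shows "\<exists>r\<in>S. Y r \<in> Fc \<and> (\<exists>w. E r w \<and> Y w \<noteq> Y r)"
proof (rule ccontr)
  assume na: "\<not> ?thesis"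
  obtain \<gamma> where gam: "\<gamma> \<in> Fc" using assms by auto
  then obtain v0 where v0: "v0 \<in> S" "Y v0 = \<gamma>" using Fc_img by auto
  have "S \<noteq> V" using SVc by auto
  then obtain z where z: "z \<in> V" "z \<notin> S" using SV by auto
  have "(\<lambda>x y. E x y \<and> x \<in> V \<and> y \<in> V)\<^sup>*\<^sup>* v0 z"
    using gc v0 z SV unfolding graph_connected_def induced_connected_def by auto
  moreover have "\<And>p q. E p q \<and> p \<in> V \<and> q \<in> V \<Longrightarrow> p \<in> {v\<in>S. Y v = \<gamma>} \<Longrightarrow> q \<in> {v\<in>S. Y v = \<gamma>}"
  proof -
    fix p q assume pq: "E p q \<and> p \<in> V \<and> q \<in> V" "p \<in> {v\<in>S. Y v = \<gamma>}"
    have "Y q = Y p" using na pq gam by auto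
    moreover have "q \<in> S" using free_out[of p q] pq gam calculation by auto
    ultimately show "q \<in> {v\<in>S. Y v = \<gamma>}" using pq by auto
  qed
  ultimately have "z \<in> {v\<in>S. Y v = \<gamma>}" using rtranclp_closed[of _ v0 z "{v\<in>S. Y v = \<gamma>}"] v0 by blast
  then show False using z by simp
qed

lemma M_empty: "M {} = {}" unfolding M_def by auto

lemma u_empty: "u {} = card S - card Fc"
proof -
  have "Y ` S \<inter> Fc = Fc" using Fc_img by auto
  then show ?thesis unfolding u_def g_def by simp
qed

lemma grow: "1 \<le> n \<Longrightarrow> n \<le> card S \<Longrightarrow> \<exists>T\<subseteq>S. card T = n \<and> card (M T) + (D - 1) * u T \<le> B"
proof (induction n)
  case 0
  then show ?case by simp
next
  case (Suc n)
  show ?case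
  proof (cases "n = 0")
    case True
    show ?thesis
    proof (cases "card Fc = 0")
      case True
      obtain r where r: "r \<in> S" using S2 by fastforce
      have "card (M {r}) + (D - 1) * u {r} \<le> (D - 1) * (card S - card Fc) + 1"
        using step[of "{}" r] r M_empty u_empty by (simp split: if_splits)
      then show ?thesis using True \<open>n = 0\<close> r unfolding B_def by (intro exI[of _ "{r}"]) auto
    next
      case False
      then have "Fc \<noteq> {}" by auto
      then obtain r where r: "r \<in> S" "Y r \<in> Fc" "\<exists>w. E r w \<and> Y w \<noteq> Y r" using root by auto
      have "card (M {r}) + (D - 1) * u {r} \<le> (D - 1) * (card S - card Fc)"
        using step[of "{}" r] r M_empty u_empty by simp
      then show ?thesis using False \<open>n = 0\<close> r unfolding B_def by (intro exI[of _ "{r}"]) auto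
    qed
  next
    case False
    then obtain T where T: "T \<subseteq> S" "card T = n" "card (M T) + (D - 1) * u T \<le> B"
      using Suc by auto
    have "T \<noteq> {}" using T False by auto
    moreover have "T \<noteq> S" using T Suc.prems by auto
    ultimately obtain x t where xt: "x \<in> S - T" "t \<in> T" "E x t" using adj T by blast
    have ex: "\<exists>t\<in>T. E x t" using xt by auto
    have "card (M (insert x T)) + (D - 1) * u (insert x T) \<le> card (M T) + (D - 1) * u T"
      using step[of T x] T xt ex by simp
    moreover have "card (insert x T) = Suc n" using T xt finS finite_subset by fastforce
    ultimately show ?thesis using T xt by (intro exI[of _ "insert x T"]) auto
  qed
qed

lemma mu_le: "mu V E X S c \<le> B"
proof -
  obtain T where T: "T \<subseteq> S" "card T = card S" "card (M T) + (D - 1) * u T \<le> B"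
    using grow[of "card S"] S2 by auto
  have "T = S" using T finS card_subset_eq by blast
  then have "card (M S) \<le> B" using T by simp
  moreover have "mu V E X S c = card (M S)" unfolding mu_def M_def by simp
  ultimately show ?thesis by simp
qed

lemma fc_eq: "free_count V E X S c = card Fc" unfolding free_count_def Fc_def by simp

lemma D_pos: "1 \<le> D"
proof -
  obtain s where s: "s \<in> S" using S2 by fastforce
  have "{s} \<noteq> S" using S2 by auto
  then obtain x t where "x \<in> S" "t \<in> {s}" "E x t" using adj[of "{s}"] s by blast
  then have "t \<in> {u\<in>V. E x u}" using Eprops by auto
  then have "card {u\<in>V. E x u} \<ge> 1" using finA by (metis One_nat_def Suc_leI card_gt_0_iff empty_iff)
  then show ?thesis using deg_le \<open>x \<in> S\<close> SV by fastforce
qed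

end

lemma real_bound:
  fixes m D k f :: nat
  assumes "m \<le> (D - 1) * (k - f) + (if f = 0 then 1 else 0)" "f < k" "1 \<le> D"
  shows "real m / (real k - real f) \<le> real D - 1 + 1 / real k"
proof -
  have kpos: "real k > 0" using assms by simp
  have m1: "real m \<le> (real D - 1) * (real k - real f) + (if f = 0 then 1 else 0)"
  proof -
    have "real m \<le> real ((D - 1) * (k - f) + (if f = 0 then 1 else 0))" using assms(1) by linarith
    then show ?thesis using assms(2,3) by (cases "f = 0") (simp_all add: of_nat_diff)
  qed
  have "real m \<le> (real D - 1 + 1 / real k) * (real k - real f)"
  proof (cases "f = 0")
    case True
    then show ?thesis using m1 kpos by (simp add: algebra_simps)
  next
    case False
    have "(real D - 1) * (real k - real f) \<le> (real D - 1 + 1 / real k) * (real k - real f)"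
      using assms kpos by (intro mult_right_mono) auto
    then show ?thesis using m1 False by simp
  qed
  then show ?thesis using assms(2) by (simp add: pos_divide_le_eq)
qed

theorem lemma2p6:
  fixes V :: "'a set" and E :: "'a \<Rightarrow> 'a \<Rightarrow> bool" and q k :: nat and Sys :: "'a \<Rightarrow> 'a set"
  assumes "simple_graph V E"
    and "graph_connected V E"
    and "q > 0"
    and "2 \<le> k" and "k \<le> card V - 1"
    and "block_system V E k Sys"
  shows "mu_plus_sys q V E Sys \<le> real (max_degree V E) - 1 + 1 / real k"
proof -
  define bd where "bd = real (max_degree V E) - 1 + 1 / real k"
  have finV: "finite V" using assms(1) simple_graph_def by auto
  have kV: "k < card V" using assms(4,5) by linarith
  have Vne: "V \<noteq> {}" using kV by auto
  have blk: "blk V E (Sys v)" if "v \<in> V" for v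
    using assms that kV unfolding blk_def block_system_def by auto
  obtain v0 where v0: "v0 \<in> V" using Vne by auto
  have D1: "1 \<le> max_degree V E" using blk.D_pos[OF blk[OF v0]] blk.D_def[OF blk[OF v0]] by metis
  have bdpos: "0 \<le> bd" unfolding bd_def using D1 by simp
  have finC: "finite (configs q A)" if "finite A" for A :: "'a set"
    unfolding configs_def using that by (simp add: finite_PiE)
  have elem: "mu_plus_f q V E X S f \<le> bd" if SinV: "S \<in> Sys ` V" and fl: "f < card S" for S X f
  proof -
    obtain v where v: "v \<in> V" "S = Sys v" using SinV by auto
    have cS: "card S = k" using assms(6) v unfolding block_system_def by auto
    have SsubV: "S \<subseteq> V" using assms(6) v unfolding block_system_def by auto
    define R where "R = {real (mu V E X S c) / (real (card S) - real f) | c.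
                 c \<in> configs q S \<and> free_count V E X S c = f}"
    have "\<forall>r\<in>R. r \<le> bd"
    proof
      fix r assume "r \<in> R"
      then obtain c where c: "r = real (mu V E X S c) / (real (card S) - real f)"
        "free_count V E X S c = f" unfolding R_def by auto
      interpret b: blk V E S X c using blk[OF v(1)] v by simp
      have "mu V E X S c \<le> (max_degree V E - 1) * (k - f) + (if f = 0 then 1 else 0)"
        using b.mu_le b.fc_eq c cS unfolding b.B_def b.D_def by simp
      then show "r \<le> bd" using real_bound[of _ "max_degree V E" k f] c cS fl D1
        unfolding bd_def by simp
    qed
    moreover have "finite R"
    proof -
      have "R \<subseteq> (\<lambda>c. real (mu V E X S c) / (real (card S) - real f)) ` configs q S"
        unfolding R_def by auto
      then show ?thesis using finC[of S] SsubV finV finite_subset by (metis finite_imageI)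
    qed
    ultimately show ?thesis unfolding mu_plus_f_def Let_def R_def[symmetric]
      using bdpos by auto
  qed
  define Z where "Z = {mu_plus_f q V E X S f | S X f. S \<in> Sys ` V \<and> X \<in> configs q V \<and> f < card S}"
  have finZ: "finite Z"
  proof -
    have "Z \<subseteq> (\<lambda>(S, X, f). mu_plus_f q V E X S f) ` (Sys ` V \<times> configs q V \<times> {..<k})"
    proof
      fix z assume "z \<in> Z"
      then obtain S X f where z: "z = mu_plus_f q V E X S f" "S \<in> Sys ` V" "X \<in> configs q V" "f < card S"
        unfolding Z_def by blast
      then have "f < k" using assms(6) unfolding block_system_def by auto
      then have "(S, X, f) \<in> Sys ` V \<times> configs q V \<times> {..<k}" using z by auto
      then show "z \<in> (\<lambda>(S, X, f). mu_plus_f q V E X S f) ` (Sys ` V \<times> configs q V \<times> {..<k})"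
        using z(1) by (metis (no_types, lifting) case_prod_conv image_eqI)
    qed
    then show ?thesis using finV finC[of V] by (meson finite_SigmaI finite_imageI finite_lessThan finite_subset)
  qed
  have "(\<lambda>v\<in>V. 1::nat) \<in> configs q V" unfolding configs_def using assms(3) by auto
  moreover have "0 < card (Sys v0)" using assms(4,6) v0 unfolding block_system_def by auto
  ultimately have "mu_plus_f q V E (\<lambda>v\<in>V. 1) (Sys v0) 0 \<in> Z" unfolding Z_def using v0 by blast
  then have "Z \<noteq> {}" by auto
  moreover have "\<forall>z\<in>Z. z \<le> bd" unfolding Z_def using elem by auto
  ultimately have "Max Z \<le> bd" using finZ by simp
  then show ?thesis unfolding mu_plus_sys_def Z_def[symmetric] bd_def .
qed

end
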